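(* Let $p$ be a prime, $r \geq 1$ an integer, and let $D \in \mathbb{Z}_{p^r}^*$ be such that $D \bmod p$ is a quadratic non-residue in $\mathbb{Z}_p$. Then $(\mathcal{H}_{D,\mathbb{Z}_{p^r}}, \otimes)$ is a cyclic group of order $p^{r-1}(p+1)$; i.e., the Pell equation $x^2 - D y^2 = 1$ has exactly $p^{r-1}(p+1)$ solutions $(x,y) \in \mathbb{Z}_{p^r} \times \mathbb{Z}_{p^r}$.
   Context: For a commutative ring $R$ and $D \in R$, let $\mathcal{H}_{D,R} = \{(x,y) \in R \times R : x^2 - D y^2 = 1\}$, equipped with the product $(x,y) \otimes (w,z) = (xw + yzD,\ yw + xz)$. This is a commutative group with identity $(1,0)$ and inverse of $(x,y)$ equal to $(x,-y)$. Here $\mathbb{Z}_{m}$ denotes the ring of integers modulo $m$. *)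

theory Defs
  imports "HOL-Number_Theory.Number_Theory" "HOL-Algebra.Elementary_Groups"
begin

definition pell_group :: "('a, 'b) ring_scheme \<Rightarrow> 'a \<Rightarrow> ('a \<times> 'a) monoid" where
  "pell_group R D =
    \<lparr>carrier = {(x, y). x \<in> carrier R \<and> y \<in> carrier R \<and>
                   (x \<otimes>\<^bsub>R\<^esub> x) \<ominus>\<^bsub>R\<^esub> (D \<otimes>\<^bsub>R\<^esub> (y \<otimes>\<^bsub>R\<^esub> y)) = \<one>\<^bsub>R\<^esub>},
     mult = (\<lambda>(x, y) (w, z). ((x \<otimes>\<^bsub>R\<^esub> w) \<oplus>\<^bsub>R\<^esub> ((y \<otimes>\<^bsub>R\<^esub> z) \<otimes>\<^bsub>R\<^esub> D),
                             (y \<otimes>\<^bsub>R\<^esub> w) \<oplus>\<^bsub>R\<^esub> (x \<otimes>\<^bsub>R\<^esub> z))),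
     one = (\<one>\<^bsub>R\<^esub>, \<zero>\<^bsub>R\<^esub>)\<rparr>"

end

theory Submission
  imports Defs
begin



definition mulz :: "int \<Rightarrow> int \<times> int \<Rightarrow> int \<times> int \<Rightarrow> int \<times> int" where
  "mulz D a b = (fst a * fst b + snd a * snd b * D, snd a * fst b + fst a * snd b)"

fun powz :: "int \<Rightarrow> int \<times> int \<Rightarrow> nat \<Rightarrow> int \<times> int" where
  "powz D g 0 = (1, 0)"
| "powz D g (Suc n) = mulz D (powz D g n) g"

definition modp :: "int \<Rightarrow> int \<times> int \<Rightarrow> int \<times> int" where
  "modp M a = (fst a mod M, snd a mod M)"

definition normz :: "int \<Rightarrow> int \<times> int \<Rightarrow> int" where
  "normz D a = fst a * fst a - D * (snd a * snd a)"

lemma pg_carrier: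
  assumes "M > 1"
  shows "carrier (pell_group (residue_ring M) D) =
    {a. 0 \<le> fst a \<and> fst a < M \<and> 0 \<le> snd a \<and> snd a < M \<and> normz D a mod M = 1}"
proof -
  interpret residues M "residue_ring M" by unfold_locales (use assms in auto)
  have e: "((x * x) mod M \<oplus>\<^bsub>residue_ring M\<^esub> (\<ominus>\<^bsub>residue_ring M\<^esub> ((D * ((y * y) mod M)) mod M))) = (x*x - D*(y*y)) mod M" for x y
    by (simp add: res_neg_eq res_add_eq mod_simps)
  show ?thesis
    unfolding pell_group_def a_minus_def
    by (auto simp: res_carrier_eq res_mult_eq res_one_eq e normz_def)
qed

lemma pg_mult:
  "mult (pell_group (residue_ring M) D) a b = modp M (mulz D a b)"
  by (cases a; cases b) (simp add: pell_group_def residue_ring_def modp_def mulz_def mod_simps)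

lemma pg_one: "one (pell_group (residue_ring M) D) = (1, 0)"
  by (simp add: pell_group_def residue_ring_def)


lemma cong_mod_self[simp]: "[a mod (M::int) = a] (mod M)"
  by (simp add: cong_def)

lemma mulz_assoc: "mulz D (mulz D a b) c = mulz D a (mulz D b c)"
  by (simp add: mulz_def algebra_simps)
lemma mulz_comm: "mulz D a b = mulz D b a"
  by (simp add: mulz_def algebra_simps)
lemma mulz_one: "mulz D (1,0) a = a"
  by (simp add: mulz_def)
lemma modp_mulz_l: "modp M (mulz D (modp M a) b) = modp M (mulz D a b)"
  unfolding modp_def mulz_def by (auto simp flip: cong_def intro!: cong_add cong_mult)
lemma modp_mulz_r: "modp M (mulz D a (modp M b)) = modp M (mulz D a b)"
  unfolding modp_def mulz_def by (auto simp flip: cong_def intro!: cong_add cong_mult)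
lemma normz_mulz: "normz D (mulz D a b) = normz D a * normz D b"
  by (simp add: normz_def mulz_def algebra_simps)
lemma normz_powz: "normz D (powz D g n) = normz D g ^ n"
  by (induction n) (simp_all add: normz_mulz, simp add: normz_def)
lemma normz_modp: "normz D (modp M a) mod M = normz D a mod M"
  unfolding normz_def modp_def by (auto simp flip: cong_def intro!: cong_diff cong_mult)
lemma powz_modp: "modp M (powz D (modp M g) n) = modp M (powz D g n)"
proof (induction n)
  case (Suc n)
  have "modp M (powz D (modp M g) (Suc n)) = modp M (mulz D (modp M (powz D (modp M g) n)) (modp M g))"
    by (simp add: modp_mulz_l modp_mulz_r)
  also have "\<dots> = modp M (mulz D (modp M (powz D g n)) (modp M g))" using Suc by simp
  also have "\<dots> = modp M (powz D g (Suc n))" by (simp add: modp_mulz_l modp_mulz_r)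
  finally show ?case .
qed simp
lemma modp_modp: "M' dvd M \<Longrightarrow> modp M' (modp M a) = modp M' a"
  by (simp add: modp_def mod_mod_cancel)
lemma modp_id: "0 \<le> fst a \<Longrightarrow> fst a < M \<Longrightarrow> 0 \<le> snd a \<Longrightarrow> snd a < M \<Longrightarrow> modp M a = a"
  by (cases a) (simp add: modp_def)

lemma pg_comm_group:
  assumes "M > 1"
  shows "comm_group (pell_group (residue_ring M) D)"
proof -
  let ?G = "pell_group (residue_ring M) D"
  note C = pg_carrier[OF assms, of D]
  have M0: "M > 0" using assms by simp
  show ?thesis
  proof (rule comm_groupI)
    fix a b assume a: "a \<in> carrier ?G" and b: "b \<in> carrier ?G"
    have "normz D (modp M (mulz D a b)) mod M = (normz D a mod M) * (normz D b mod M) mod M"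
      by (simp add: normz_modp normz_mulz mod_simps)
    also have "\<dots> = 1" using a b C assms by simp
    finally show "a \<otimes>\<^bsub>?G\<^esub> b \<in> carrier ?G"
      using C M0 by (simp add: pg_mult modp_def)
    show "a \<otimes>\<^bsub>?G\<^esub> b = b \<otimes>\<^bsub>?G\<^esub> a" by (simp add: pg_mult mulz_comm)
  next
    show "\<one>\<^bsub>?G\<^esub> \<in> carrier ?G" using C assms by (simp add: pg_one normz_def)
  next
    fix a b c assume "a \<in> carrier ?G" "b \<in> carrier ?G" "c \<in> carrier ?G"
    show "a \<otimes>\<^bsub>?G\<^esub> b \<otimes>\<^bsub>?G\<^esub> c = a \<otimes>\<^bsub>?G\<^esub> (b \<otimes>\<^bsub>?G\<^esub> c)"
      by (simp add: pg_mult modp_mulz_l modp_mulz_r mulz_assoc)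
  next
    fix a assume a: "a \<in> carrier ?G"
    then show "\<one>\<^bsub>?G\<^esub> \<otimes>\<^bsub>?G\<^esub> a = a"
      using C by (simp add: pg_mult pg_one mulz_one modp_id)
  next
    fix a assume a: "a \<in> carrier ?G"
    obtain x y where xy: "a = (x, y)" by (cases a)
    have in1: "(x, (- y) mod M) \<in> carrier ?G"
      using a C M0 xy normz_modp[of D M "(x, -y)"] by (simp add: normz_def modp_def)
    have "modp M (mulz D (x, (- y) mod M) (x, y)) = modp M (mulz D (x, - y) (x, y))"
      using modp_mulz_l[of M D "(x, - y)" "(x,y)"] a C xy by (simp add: modp_def)
    also have "\<dots> = (normz D a mod M, 0)" by (simp add: modp_def mulz_def normz_def xy algebra_simps)
    also have "\<dots> = (1, 0)" using a C by simp
    finally show "\<exists>b \<in> carrier ?G. b \<otimes>\<^bsub>?G\<^esub> a = \<one>\<^bsub>?G\<^esub>"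
      using in1 xy by (auto simp: pg_mult pg_one)
  qed
qed

lemma pg_pow:
  assumes "M > 1" "g \<in> carrier (pell_group (residue_ring M) D)"
  shows "g [^]\<^bsub>pell_group (residue_ring M) D\<^esub> n = modp M (powz D g n)"
proof (induction n)
  case 0 then show ?case using assms by (simp add: pg_one modp_def)
next
  case (Suc n)
  then show ?case by (simp add: pg_mult modp_mulz_l)
qed




definition invm :: "int \<Rightarrow> int \<Rightarrow> int" where
  "invm M a = (SOME i. [a * i = 1] (mod M))"

lemma invm: "coprime a M \<Longrightarrow> [a * invm M a = 1] (mod M)"
  unfolding invm_def by (rule someI_ex) (rule cong_solve_coprime_int)

definition pt :: "int \<Rightarrow> int \<Rightarrow> int \<Rightarrow> int \<Rightarrow> int \<times> int" where
  "pt D M u v = modp M ((u*u + D*(v*v)) * invm M (u*u - D*(v*v)), 2*u*v * invm M (u*u - D*(v*v)))"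

lemma pt_norm:
  assumes "[(u*u - D*(v*v)) * i = 1] (mod M)"
  shows "[normz D ((u*u + D*(v*v)) * i, 2*u*v*i) = 1] (mod M)"
proof -
  have "normz D ((u*u + D*(v*v)) * i, 2*u*v*i) = ((u*u - D*(v*v)) * i)^2"
    by (simp add: normz_def power2_eq_square algebra_simps)
  moreover have "[((u*u - D*(v*v)) * i)^2 = 1^2] (mod M)"
    using assms by (rule cong_pow)
  ultimately show ?thesis by simp
qed

locale pellctx =
  fixes p :: nat and D :: int
  assumes p_prime: "prime p" and nqr: "\<not> QuadRes (int p) D"
begin

lemma pI: "prime (int p)" using p_prime by simp

lemma p_ndvd1: "\<not> int p dvd 1"
  using pI not_prime_unit by blast

lemma NR:
  assumes "int p dvd u*u - D*(v*v)"
  shows "int p dvd u \<and> int p dvd v"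
proof (cases "int p dvd v")
  case True
  then have "int p dvd u*u" using assms
  proof -
    have "int p dvd D*(v*v)" using True by simp
    then have "int p dvd (u*u - D*(v*v)) + D*(v*v)" using assms by (rule dvd_add[rotated])
    then show ?thesis by simp
  qed
  then show ?thesis using True pI prime_dvd_mult_iff by blast
next
  case False
  then have "coprime v (int p)" using pI prime_imp_coprime coprime_commute by blast
  then obtain w where w: "[v*w = 1] (mod int p)" using cong_solve_coprime_int by blast
  have "[(u*w)^2 = D] (mod int p)"
  proof -
    have "[u*u = D*(v*v)] (mod int p)" using assms by (simp add: cong_iff_dvd_diff)
    then have "[u*u*(w*w) = D*(v*v)*(w*w)] (mod int p)" by (rule cong_mult) simp
    moreover have "D*(v*v)*(w*w) = D*((v*w)*(v*w))" by (simp add: ac_simps)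
    moreover have "[D*((v*w)*(v*w)) = D*(1*1)] (mod int p)"
      using w by (intro cong_mult cong_refl)
    ultimately have "[u*u*(w*w) = D*(1*1)] (mod int p)" by (metis cong_trans)
    moreover have "(u*w)^2 = u*u*(w*w)" by (simp add: power2_eq_square ac_simps)
    ultimately show ?thesis by simp
  qed
  then show ?thesis using nqr unfolding QuadRes_def by blast
qed

lemma p_ndvd_D: "\<not> int p dvd D"
proof
  assume "int p dvd D"
  then have "int p dvd 0*0 - D*(1*1)" by simp
  then show False using NR p_ndvd1 by blast
qed

lemma p_odd: "odd p"
proof
  assume "even p"
  then have p2: "p = 2" using primes_dvd_imp_eq[OF two_is_prime_nat p_prime] by simp
  then have "odd D" using p_ndvd_D by simp
  then have "[1^2 = D] (mod int p)" using p2 by (simp add: cong_def odd_iff_mod_2_eq_one)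
  then show False using nqr unfolding QuadRes_def by blast
qed

lemma p_ge3: "p \<ge> 3"
proof -
  have "p \<ge> 2" using p_prime prime_ge_2_nat by blast
  moreover have "p \<noteq> 2" using p_odd by auto
  ultimately show ?thesis by simp
qed

lemma p_ndvd_2: "\<not> int p dvd 2"
proof
  assume "int p dvd 2"
  then have "int p \<le> 2" by (rule zdvd_imp_le) simp
  then show False using p_ge3 by simp
qed

lemma cop_p: "\<not> int p dvd a \<Longrightarrow> coprime a (int p ^ k)"
proof -
  assume "\<not> int p dvd a"
  then have "coprime a (int p)" using pI prime_imp_coprime coprime_commute by blast
  then show ?thesis by simp
qed

lemma tD_ndvd: "\<not> int p dvd t*t - D"
proof
  assume "int p dvd t*t - D"
  then have "int p dvd t*t - D*(1*1)" by simp
  then show False using NR p_ndvd1 by blast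
qed

lemma fermat_int:
  assumes "\<not> int p dvd a"
  shows "[a ^ (p - 1) = 1] (mod int p)"
proof -
  define b where "b = nat (a mod int p)"
  have pb: "int b = a mod int p" using p_ge3 by (simp add: b_def)
  have "\<not> p dvd b"
    using assms pb by (metis dvd_mod_iff int_dvd_int_iff dvd_refl)
  then have "[b ^ (p - 1) = 1] (mod p)" using fermat_theorem p_prime by blast
  then have "[int b ^ (p - 1) = 1] (mod int p)"
    by (metis cong_int_iff of_nat_1 of_nat_power)
  moreover have "[a ^ (p-1) = int b ^ (p - 1)] (mod int p)"
    using pb by (intro cong_pow) (simp add: cong_def)
  ultimately show ?thesis using cong_trans by blast
qed


lemma dvd_modself: "(M::int) dvd a mod M - a"
  using mod_eq_dvd_iff[of "a mod M" M a] by simp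

lemma inv_param:
  fixes M x y w t i :: int
  assumes h1: "M dvd x*x - D*(y*y) - 1" and h2: "M dvd (x-1)*w - 1"
    and ht: "M dvd t - D*y*w" and h3: "M dvd (t*t - D)*i - 1"
  shows "M dvd (t*t + D)*i - x" "M dvd 2*t*i - y"
proof -
  define t0 where "t0 = D*y*w"
  have e1: "t0*t0 - D - 2*D*w = (-D*w*w)*(x*x - D*(y*y) - 1) + (D*(x+1)*w + D)*((x-1)*w - 1)"
    by (simp add: t0_def algebra_simps)
  have e2: "t0*t0 + D - 2*D*x*w = (-D*w*w)*(x*x - D*(y*y) - 1) + (D*(x+1)*w - D)*((x-1)*w - 1)"
    by (simp add: t0_def algebra_simps)
  have d1: "M dvd t0*t0 - D - 2*D*w" unfolding e1 using h1 h2 by (intro dvd_add dvd_mult)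
  have d2: "M dvd t0*t0 + D - 2*D*x*w" unfolding e2 using h1 h2 by (intro dvd_add dvd_mult)
  have tt: "M dvd t*t - t0*t0"
  proof -
    have "t*t - t0*t0 = (t - t0)*(t + t0)" by (simp add: algebra_simps)
    then show ?thesis using ht by (simp add: t0_def)
  qed
  have q1: "M dvd t*t - D - 2*D*w"
  proof -
    have "t*t - D - 2*D*w = (t*t - t0*t0) + (t0*t0 - D - 2*D*w)" by simp
    then show ?thesis using tt d1 by (metis dvd_add)
  qed
  have q2: "M dvd t*t + D - 2*D*x*w"
  proof -
    have "t*t + D - 2*D*x*w = (t*t - t0*t0) + (t0*t0 + D - 2*D*x*w)" by simp
    then show ?thesis using tt d2 by (metis dvd_add)
  qed
  have eA: "(t*t + D)*i - x = (t*t + D - 2*D*x*w)*i - x*(t*t - D - 2*D*w)*i + x*((t*t - D)*i - 1)"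
    by (simp add: algebra_simps)
  have a1: "M dvd (t*t + D - 2*D*x*w)*i" using q2 by (rule dvd_mult2)
  have a2: "M dvd x*(t*t - D - 2*D*w)*i" using q1 by (intro dvd_mult2 dvd_mult)
  have a3: "M dvd x*((t*t - D)*i - 1)" using h3 by (rule dvd_mult)
  show "M dvd (t*t + D)*i - x" by (subst eA) (intro dvd_add dvd_diff a1 a2 a3)
  have eB: "2*t*i - y = - (y*(t*t - D - 2*D*w)*i) + y*((t*t - D)*i - 1) + 2*(t - t0)*i"
    by (simp add: t0_def algebra_simps)
  have b1: "M dvd - (y*(t*t - D - 2*D*w)*i)" using q1 by (simp add: dvd_mult2 dvd_mult)
  have b2: "M dvd y*((t*t - D)*i - 1)" using h3 by (rule dvd_mult)
  have b3: "M dvd 2*(t - t0)*i" using ht unfolding t0_def by (intro dvd_mult2 dvd_mult)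
  show "M dvd 2*t*i - y" by (subst eB) (intro dvd_add b1 b2 b3)
qed

lemma fwd_param:
  fixes M t i :: int
  assumes h3: "M dvd (t*t - D)*i - 1"
  shows "M dvd (t*t + D)*i - 1 - 2*D*i"
    "M dvd (t*t + D)*i + 1 - 2*t*t*i"
    "M dvd D*(2*t*i) - t*((t*t + D)*i - 1)"
proof -
  have e: "(t*t + D)*i - 1 - 2*D*i = (t*t - D)*i - 1" by (simp add: algebra_simps)
  show "M dvd (t*t + D)*i - 1 - 2*D*i" by (subst e) (rule h3)
  have e: "(t*t + D)*i + 1 - 2*t*t*i = - ((t*t - D)*i - 1)" by (simp add: algebra_simps)
  show "M dvd (t*t + D)*i + 1 - 2*t*t*i" by (subst e) (simp only: dvd_minus_iff h3)
  have e: "D*(2*t*i) - t*((t*t + D)*i - 1) = - (t * ((t*t - D)*i - 1))" by (simp add: algebra_simps)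
  show "M dvd D*(2*t*i) - t*((t*t + D)*i - 1)" by (subst e) (simp only: dvd_minus_iff dvd_mult h3)
qed
end



context pellctx begin

definition iv :: "nat \<Rightarrow> int \<Rightarrow> int" where "iv k t = invm (int p ^ k) (t*t - D)"
definition fp :: "nat \<Rightarrow> int \<Rightarrow> int \<times> int" where
  "fp k t = modp (int p ^ k) ((t*t + D) * iv k t, 2*t*iv k t)"

lemma Mgt1: "k \<ge> 1 \<Longrightarrow> int p ^ k > 1"
  using p_ge3 by (metis less_le_trans of_nat_1 of_nat_less_iff one_less_power order_le_less_trans numeral_le_iff semiring_norm(69,72) less_one not_less_eq_eq eval_nat_numeral(3) of_nat_le_iff le_less_linear one_le_numeral less_numeral_extra(1)) 

lemma pk_dvd: "j \<le> k \<Longrightarrow> int p ^ j dvd int p ^ k"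
  by (rule le_imp_power_dvd)

lemma p_dvd_pk: "k \<ge> 1 \<Longrightarrow> int p dvd int p ^ k"
  using pk_dvd[of 1 k] by simp

lemma iv_dvd: "int p ^ k dvd (t*t - D) * iv k t - 1"
proof -
  have "coprime (t*t - D) (int p ^ k)" using cop_p tD_ndvd by blast
  then show ?thesis using invm[of "t*t - D" "int p ^ k"] unfolding iv_def by (simp add: cong_iff_dvd_diff)
qed

lemma iv_p: assumes "k \<ge> 1" shows "\<not> int p dvd iv k t"
proof
  assume "int p dvd iv k t"
  then have a: "int p dvd (t*t - D) * iv k t" by (rule dvd_mult)
  have b: "int p dvd (t*t - D) * iv k t - 1" using iv_dvd p_dvd_pk[OF assms] dvd_trans by blast
  have "int p dvd (t*t - D) * iv k t - ((t*t - D) * iv k t - 1)" using a b by (rule dvd_diff)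
  then show False using p_ndvd1 by simp
qed

lemma fp_carrier:
  assumes "k \<ge> 1" shows "fp k t \<in> carrier (pell_group (residue_ring (int p ^ k)) D)"
proof -
  let ?M = "int p ^ k" and ?i = "iv k t"
  have M: "?M > 1" using Mgt1 assms by blast
  have "normz D ((t*t + D) * ?i, 2*t*?i) = ((t*t - D) * ?i)^2"
    by (simp add: normz_def power2_eq_square algebra_simps)
  moreover have "[((t*t - D) * ?i)^2 = 1^2] (mod ?M)"
    using iv_dvd[of k t] by (intro cong_pow) (simp add: cong_iff_dvd_diff)
  ultimately have "normz D ((t*t + D) * ?i, 2*t*?i) mod ?M = 1"
    using M by (simp add: cong_def)
  moreover have "?M > 0" using M by linarith
  ultimately show ?thesis using M
    by (simp add: pg_carrier fp_def normz_modp) (simp add: modp_def)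
qed

lemma fst_fp: "fst (fp k t) = ((t*t + D) * iv k t) mod (int p ^ k)"
  by (simp add: fp_def modp_def)
lemma snd_fp: "snd (fp k t) = (2*t*iv k t) mod (int p ^ k)"
  by (simp add: fp_def modp_def)

lemma fp_x1: assumes "k \<ge> 1" shows "\<not> int p dvd fst (fp k t) - 1"
proof
  let ?M = "int p ^ k" and ?i = "iv k t"
  let ?X = "(t*t + D) * ?i"
  assume a: "int p dvd fst (fp k t) - 1"
  have b: "int p dvd ?X mod ?M - ?X" using dvd_modself p_dvd_pk[OF assms] dvd_trans by blast
  have c: "int p dvd ?X - 1 - 2*D*?i"
    using fwd_param(1)[OF iv_dvd[of k t]] p_dvd_pk[OF assms] dvd_trans by blast
  have a': "int p dvd ?X mod ?M - 1" using a by (simp add: fst_fp)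
  have "int p dvd (?X mod ?M - 1) - (?X mod ?M - ?X) - (?X - 1 - 2*D*?i)"
    using dvd_diff[OF dvd_diff[OF a' b] c] .
  moreover have "(?X mod ?M - 1) - (?X mod ?M - ?X) - (?X - 1 - 2*D*?i) = 2*D*?i" by simp
  ultimately have "int p dvd 2*D*?i" by simp
  then show False using pI p_ndvd_2 p_ndvd_D iv_p[OF assms] by (simp add: prime_dvd_mult_iff)
qed

lemma fp_xp1: assumes "k \<ge> 1" shows "int p dvd fst (fp k t) + 1 \<longleftrightarrow> int p dvd t"
proof -
  let ?M = "int p ^ k" and ?i = "iv k t"
  let ?X = "(t*t + D) * ?i"
  have b: "int p dvd ?X mod ?M - ?X" using dvd_modself p_dvd_pk[OF assms] dvd_trans by blast
  have c: "int p dvd ?X + 1 - 2*t*t*?i"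
    using fwd_param(2)[OF iv_dvd[of k t]] p_dvd_pk[OF assms] dvd_trans by blast
  have e: "fst (fp k t) + 1 = (?X mod ?M - ?X) + (?X + 1 - 2*t*t*?i) + 2*t*t*?i"
    by (simp add: fst_fp)
  have "int p dvd fst (fp k t) + 1 \<longleftrightarrow> int p dvd 2*t*t*?i"
    unfolding e using b c by (metis dvd_add_right_iff)
  also have "\<dots> \<longleftrightarrow> int p dvd t"
    using pI p_ndvd_2 iv_p[OF assms] by (auto simp add: prime_dvd_mult_iff)
  finally show ?thesis .
qed

lemma fp_rel: "int p ^ k dvd D * snd (fp k t) - t * (fst (fp k t) - 1)"
proof -
  let ?M = "int p ^ k" and ?i = "iv k t"
  let ?X = "(t*t + D) * ?i" and ?Y = "2*t*?i"
  have e: "D * snd (fp k t) - t * (fst (fp k t) - 1) =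
      (D*?Y - t*(?X - 1)) + D*(?Y mod ?M - ?Y) - t*(?X mod ?M - ?X)"
    by (simp add: fst_fp snd_fp algebra_simps)
  have "?M dvd (D*?Y - t*(?X - 1))" using fwd_param(3)[OF iv_dvd[of k t]] by simp
  moreover have "?M dvd D*(?Y mod ?M - ?Y)" by (intro dvd_mult dvd_modself)
  moreover have "?M dvd t*(?X mod ?M - ?X)" by (intro dvd_mult dvd_modself)
  ultimately show ?thesis unfolding e by (rule dvd_diff[OF dvd_add])
qed

lemma fp_inj: assumes "k \<ge> 1" shows "inj_on (fp k) {0..<int p ^ k}"
proof
  fix t1 t2 assume t1: "t1 \<in> {0..<int p ^ k}" and t2: "t2 \<in> {0..<int p ^ k}" and eq: "fp k t1 = fp k t2"
  let ?M = "int p ^ k"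
  let ?x = "fst (fp k t1)" and ?y = "snd (fp k t1)"
  have a: "?M dvd D * ?y - t1 * (?x - 1)" using fp_rel by blast
  have b: "?M dvd D * ?y - t2 * (?x - 1)" using fp_rel[of k t2] eq by simp
  have "?M dvd (t2 - t1) * (?x - 1)"
  proof -
    have "(t2 - t1) * (?x - 1) = (D * ?y - t1 * (?x - 1)) - (D * ?y - t2 * (?x - 1))"
      by (simp add: algebra_simps)
    moreover have "?M dvd (D * ?y - t1 * (?x - 1)) - (D * ?y - t2 * (?x - 1))" using a b by (rule dvd_diff)
    ultimately show ?thesis by simp
  qed
  moreover have "coprime (?x - 1) ?M" using cop_p fp_x1[OF assms] by blast
  ultimately have "?M dvd t2 - t1" using coprime_dvd_mult_left_iff coprime_commute by blast
  then have "t2 mod ?M = t1 mod ?M" by (simp add: mod_eq_dvd_iff)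
  then show "t1 = t2" using t1 t2 by simp
qed

lemma fp_surj:
  assumes "k \<ge> 1" and a: "a \<in> carrier (pell_group (residue_ring (int p ^ k)) D)"
    and x1: "\<not> int p dvd fst a - 1"
  shows "a \<in> fp k ` {0..<int p ^ k}"
proof -
  let ?M = "int p ^ k"
  have M: "?M > 1" using Mgt1 assms by blast
  obtain x y where xy: "a = (x, y)" by (cases a)
  have ac: "0 \<le> x" "x < ?M" "0 \<le> y" "y < ?M" "normz D (x,y) mod ?M = 1"
    using a M xy by (auto simp: pg_carrier)
  have h1: "?M dvd x*x - D*(y*y) - 1"
    using ac(5) M mod_eq_dvd_iff[of "normz D (x,y)" ?M 1] by (simp add: normz_def)
  have "coprime (x - 1) ?M" using cop_p x1 xy by simp
  then obtain w where "[(x-1)*w = 1] (mod ?M)" using cong_solve_coprime_int by blast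
  then have h2: "?M dvd (x-1)*w - 1" by (simp add: cong_iff_dvd_diff)
  define t where "t = (D*y*w) mod ?M"
  have ht: "?M dvd t - D*y*w" unfolding t_def by (rule dvd_modself)
  have h3: "?M dvd (t*t - D)*iv k t - 1" by (rule iv_dvd)
  have X: "?M dvd (t*t + D)*iv k t - x" and Y: "?M dvd 2*t*iv k t - y"
    using inv_param[OF h1 h2 ht h3] by auto
  have "fp k t = a"
    using X Y ac xy by (simp add: fp_def modp_def mod_eq_dvd_iff[symmetric])
  moreover have "?M > 0" using M by linarith
  then have "t \<in> {0..<?M}" by (simp add: t_def del: of_nat_power)
  ultimately show ?thesis by blast
qed

end



context pellctx begin

lemma card_T:
  assumes "k \<ge> 1"
  shows "card {t \<in> {0..<int p ^ k}. int p dvd t} = p ^ (k - 1)"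
proof -
  have pk: "int p ^ k = int p * int p ^ (k - 1)" using assms by (metis Suc_diff_le diff_Suc_1 power_Suc)
  have p0: "int p > 0" using p_ge3 by simp
  have "{t \<in> {0..<int p ^ k}. int p dvd t} = (\<lambda>j. int p * j) ` {0..<int p ^ (k - 1)}"
  proof
    show "{t \<in> {0..<int p ^ k}. int p dvd t} \<subseteq> (\<lambda>j. int p * j) ` {0..<int p ^ (k - 1)}"
    proof
      fix t assume t: "t \<in> {t \<in> {0..<int p ^ k}. int p dvd t}"
      then obtain j where j: "t = int p * j" by (auto elim: dvdE)
      have "0 \<le> j" using t j p0 by (simp add: zero_le_mult_iff)
      moreover have "j < int p ^ (k - 1)" using t j p0 pk by simp
      ultimately show "t \<in> (\<lambda>j. int p * j) ` {0..<int p ^ (k - 1)}" using j by auto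
    qed
    show "(\<lambda>j. int p * j) ` {0..<int p ^ (k - 1)} \<subseteq> {t \<in> {0..<int p ^ k}. int p dvd t}"
      using p0 pk by auto
  qed
  moreover have "inj_on (\<lambda>j. int p * j) {0..<int p ^ (k - 1)}" using p0 by (simp add: inj_on_def)
  ultimately show ?thesis by (simp add: card_image del: of_nat_power) (simp add: nat_power_eq)
qed

lemma card_G:
  assumes k: "k \<ge> 1"
  shows "card (carrier (pell_group (residue_ring (int p ^ k)) D)) = p ^ k + p ^ (k - 1)"
proof -
  let ?M = "int p ^ k"
  let ?S = "carrier (pell_group (residue_ring ?M) D)"
  have M: "?M > 1" using Mgt1 k by blast
  have M0: "?M > 0" using M by linarith
  have Sc: "?S = {a. 0 \<le> fst a \<and> fst a < ?M \<and> 0 \<le> snd a \<and> snd a < ?M \<and> normz D a mod ?M = 1}"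
    using pg_carrier[OF M] .
  define neg where "neg a = ((- fst a) mod ?M, snd a)" for a :: "int \<times> int"
  define A where "A = fp k ` {0..<?M}"
  define B where "B = {a \<in> ?S. int p dvd fst a - 1}"
  define C where "C = {a \<in> ?S. int p dvd fst a + 1}"
  have finS: "finite ?S"
    by (rule finite_subset[of _ "{0..<?M} \<times> {0..<?M}"]) (auto simp: Sc)
  have AS: "A \<subseteq> ?S" using fp_carrier[OF k] by (auto simp: A_def)
  have SAB: "?S = A \<union> B"
    using AS fp_surj[OF k] by (auto simp: A_def B_def)
  have ABd: "A \<inter> B = {}" using fp_x1[OF k] by (auto simp: A_def B_def)
  have cA: "card A = p ^ k"
    unfolding A_def using card_image[OF fp_inj[OF k]] M0 by (simp del: of_nat_power) (simp add: nat_power_eq)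
  have negS: "neg a \<in> ?S" if a: "a \<in> ?S" for a
  proof -
    obtain x y where xy: "a = (x, y)" by (cases a)
    have ac: "0 \<le> y" "y < ?M" "normz D (x,y) mod ?M = 1" using a xy Sc by auto
    have "normz D (neg a) mod ?M = normz D (modp ?M (-x, y)) mod ?M"
      using ac by (simp add: neg_def xy modp_def)
    also have "\<dots> = normz D (x, y) mod ?M" using normz_modp[of D ?M "(-x,y)"] by (simp add: normz_def)
    finally show ?thesis using ac M0 by (simp add: Sc neg_def xy)
  qed
  have neg1: "fst (neg a) + 1 = ((- fst a) mod ?M - (- fst a)) - (fst a - 1)" for a
    by (simp add: neg_def)
  have neg2: "fst (neg a) - 1 = ((- fst a) mod ?M - (- fst a)) - (fst a + 1)" for a
    by (simp add: neg_def)
  have pM: "int p dvd (- fst a) mod ?M - (- fst a)" for a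
    using dvd_modself p_dvd_pk[OF k] dvd_trans by blast
  have negB: "neg ` B \<subseteq> C"
  proof
    fix b assume "b \<in> neg ` B"
    then obtain a where a: "a \<in> B" and b: "b = neg a" by auto
    have "int p dvd fst a - 1" using a by (simp add: B_def)
    then have "int p dvd fst (neg a) + 1" unfolding neg1 by (rule dvd_diff[OF pM])
    then show "b \<in> C" using negS a b by (simp add: B_def C_def)
  qed
  have negC: "neg ` C \<subseteq> B"
  proof
    fix b assume "b \<in> neg ` C"
    then obtain a where a: "a \<in> C" and b: "b = neg a" by auto
    have "int p dvd fst a + 1" using a by (simp add: C_def)
    then have "int p dvd fst (neg a) - 1" unfolding neg2 by (rule dvd_diff[OF pM])
    then show "b \<in> B" using negS a b by (simp add: B_def C_def)
  qed
  have injneg: "inj_on neg ?S"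
  proof
    fix a b assume a: "a \<in> ?S" and b: "b \<in> ?S" and e: "neg a = neg b"
    have "(- fst a) mod ?M = (- fst b) mod ?M" using e by (simp add: neg_def)
    then have "?M dvd fst b - fst a" by (simp add: mod_eq_dvd_iff)
    then have "fst a mod ?M = fst b mod ?M" by (simp add: mod_eq_dvd_iff dvd_diff_commute)
    moreover have "snd a = snd b" using e by (simp add: neg_def)
    ultimately show "a = b" using a b Sc by (simp add: prod_eq_iff)
  qed
  have BS: "B \<subseteq> ?S" and CS: "C \<subseteq> ?S" by (auto simp: B_def C_def)
  have "card B \<le> card C"
    using card_inj_on_le[OF inj_on_subset[OF injneg BS] negB] finite_subset[OF CS finS] by simp
  moreover have "card C \<le> card B"
    using card_inj_on_le[OF inj_on_subset[OF injneg CS] negC] finite_subset[OF BS finS] by simp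
  ultimately have cBC: "card B = card C" by simp
  have CT: "C = fp k ` {t \<in> {0..<?M}. int p dvd t}"
  proof
    show "C \<subseteq> fp k ` {t \<in> {0..<?M}. int p dvd t}"
    proof
      fix a assume a: "a \<in> C"
      have "\<not> int p dvd fst a - 1"
      proof
        assume h: "int p dvd fst a - 1"
        have "int p dvd fst a + 1" using a by (simp add: C_def)
        then have "int p dvd (fst a + 1) - (fst a - 1)" using h by (rule dvd_diff)
        then show False using p_ndvd_2 by simp
      qed
      moreover have "a \<in> ?S" using a by (simp add: C_def)
      ultimately have "a \<in> fp k ` {0..<?M}" using fp_surj[OF k] by blast
      then obtain t where t: "t \<in> {0..<?M}" "a = fp k t" by blast
      then have "int p dvd t" using fp_xp1[OF k] a by (simp add: C_def)
      then show "a \<in> fp k ` {t \<in> {0..<?M}. int p dvd t}" using t by auto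
    qed
    show "fp k ` {t \<in> {0..<?M}. int p dvd t} \<subseteq> C"
      using fp_carrier[OF k] fp_xp1[OF k] by (auto simp: C_def)
  qed
  have sub: "{t \<in> {0..<?M}. int p dvd t} \<subseteq> {0..<?M}" by auto
  have cC: "card C = p ^ (k - 1)"
    unfolding CT card_image[OF inj_on_subset[OF fp_inj[OF k] sub]] using card_T[OF k] .
  have "card ?S = card A + card B"
    unfolding SAB using ABd finite_subset[OF _ finS] AS BS
    by (intro card_Un_disjoint) auto
  then show ?thesis using cA cBC cC by simp
qed

end



context pellctx begin

lemma pow_dvd_mult:
  assumes "int p ^ a dvd u" "int p ^ b dvd v" "k \<le> a + b"
  shows "int p ^ k dvd u * v"
proof -
  have "int p ^ a * int p ^ b dvd u * v" using assms by (intro mult_dvd_mono)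
  then have "int p ^ (a + b) dvd u * v" by (simp add: power_add)
  then show ?thesis using pk_dvd[OF assms(3)] dvd_trans by blast
qed

lemma lvlA:
  assumes h: "int p ^ k dvd x*x - D*(y*y) - 1" and x1: "int p dvd x - 1" and yj: "int p ^ j dvd y"
    and "j' \<le> k" "j' \<le> 2*j"
  shows "int p ^ j' dvd x - 1"
proof -
  have a: "int p ^ j' dvd x*x - D*(y*y) - 1" using h pk_dvd[OF assms(4)] dvd_trans by blast
  have "int p ^ j' dvd y * y" using pow_dvd_mult[OF yj yj] assms(5) by simp
  then have b: "int p ^ j' dvd D*(y*y)" by (rule dvd_mult)
  have "int p ^ j' dvd (x*x - D*(y*y) - 1) + D*(y*y)" using a b by (rule dvd_add)
  then have c: "int p ^ j' dvd (x + 1) * (x - 1)" by (simp add: algebra_simps)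
  have "\<not> int p dvd x + 1"
  proof
    assume "int p dvd x + 1"
    then have "int p dvd (x + 1) - (x - 1)" using x1 by (rule dvd_diff)
    then show False using p_ndvd_2 by simp
  qed
  then have "coprime (x + 1) (int p ^ j')" by (rule cop_p)
  then show ?thesis using c coprime_dvd_mult_right_iff coprime_commute by blast
qed

lemma normz_pow_cong:
  assumes "M dvd normz D g - 1"
  shows "M dvd normz D (powz D g n) - 1"
proof -
  have "[normz D g = 1] (mod M)" using assms by (simp add: cong_iff_dvd_diff)
  then have "[normz D g ^ n = 1 ^ n] (mod M)" by (rule cong_pow)
  then show ?thesis by (simp add: normz_powz cong_iff_dvd_diff)
qed

lemma lvlB:
  assumes h: "int p ^ k dvd normz D g - 1" and x1: "int p dvd fst g - 1" and yj: "int p ^ j dvd snd g"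
    and j1: "j \<ge> 1" and k3: "k \<le> 3*j"
  shows "int p dvd fst (powz D g n) - 1 \<and> int p ^ j dvd snd (powz D g n) \<and>
         int p ^ k dvd snd (powz D g n) - int n * snd g"
proof (induction n)
  case 0
  then show ?case by simp
next
  case (Suc n)
  obtain x y where g: "g = (x, y)" by (cases g)
  obtain hx hy where hh: "powz D g n = (hx, hy)" by (cases "powz D g n")
  have IH: "int p dvd hx - 1" "int p ^ j dvd hy" "int p ^ k dvd hy - int n * y"
    using Suc hh g by auto
  have pj: "int p dvd int p ^ j" using p_dvd_pk[OF j1] .
  have hyp: "int p dvd hy" using IH(2) pj dvd_trans by blast
  have nh: "int p ^ k dvd hx*hx - D*(hy*hy) - 1"
    using normz_pow_cong[OF h, of n] hh by (simp add: normz_def)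
  have ng: "int p ^ k dvd x*x - D*(y*y) - 1" using h g by (simp add: normz_def)
  define j' where "j' = min (2*j) k"
  have xg: "int p ^ j' dvd x - 1"
    using lvlA[OF ng] x1 yj g by (simp add: j'_def)
  have xh: "int p ^ j' dvd hx - 1"
    using lvlA[OF nh IH(1) IH(2)] by (simp add: j'_def)
  have kk: "k \<le> j + j'" using k3 by (simp add: j'_def)
  have st: "powz D g (Suc n) = (hx*x + hy*y*D, hy*x + hx*y)" unfolding powz.simps hh by (simp add: g mulz_def)
  have f1: "int p dvd hx*x + hy*y*D - 1"
  proof -
    have e: "hx*x + hy*y*D - 1 = hx*(x - 1) + (hx - 1) + hy*(y*D)" by (simp add: algebra_simps)
    have "int p dvd hx*(x-1)" using x1 g by (simp add: dvd_mult)
    moreover have "int p dvd hy*(y*D)" using hyp by (rule dvd_mult2)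
    ultimately show ?thesis unfolding e using IH(1) by (intro dvd_add)
  qed
  have f2: "int p ^ j dvd hy*x + hx*y" using IH(2) yj g by (intro dvd_add dvd_mult dvd_mult2) auto
  have f3: "int p ^ k dvd hy*x + hx*y - int (Suc n) * y"
  proof -
    have e: "hy*x + hx*y - int (Suc n) * y = (hy - int n * y) + hy*(x - 1) + (hx - 1)*y"
      by (simp add: algebra_simps)
    have "int p ^ k dvd hy*(x - 1)" using pow_dvd_mult[OF IH(2) xg kk] .
    moreover have "int p ^ k dvd (hx - 1)*y" using pow_dvd_mult[OF xh, of j y] yj g kk by (simp add: add.commute)
    ultimately show ?thesis unfolding e using IH(3) by (intro dvd_add)
  qed
  show ?case using f1 f2 f3 st g by simp
qed

lemma lvl_step:
  assumes h: "int p ^ r dvd normz D g - 1" and x1: "int p dvd fst g - 1" and yj: "int p ^ j dvd snd g"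
    and ny: "\<not> int p ^ (j+1) dvd snd g" and j1: "j \<ge> 1" and jr: "j + 1 \<le> r"
  shows "int p ^ r dvd normz D (powz D g p) - 1 \<and> int p dvd fst (powz D g p) - 1 \<and>
         int p ^ (j+1) dvd snd (powz D g p) \<and> (j + 2 \<le> r \<longrightarrow> \<not> int p ^ (j+2) dvd snd (powz D g p))"
proof -
  define k where "k = min (j+2) r"
  have k3: "k \<le> 3*j" using j1 by (simp add: k_def)
  have hk: "int p ^ k dvd normz D g - 1" using h pk_dvd[of k r] dvd_trans by (simp add: k_def) blast
  note B = lvlB[OF hk x1 yj j1 k3, of p]
  have py: "int p ^ (j+1) dvd int p * snd g" using yj by (simp add: mult_dvd_mono)
  have a: "int p ^ (j+1) dvd snd (powz D g p) - int p * snd g"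
    using B pk_dvd[of "j+1" k] jr dvd_trans by (simp add: k_def) blast
  have c: "int p ^ (j+1) dvd snd (powz D g p)"
  proof -
    have "int p ^ (j+1) dvd (snd (powz D g p) - int p * snd g) + int p * snd g" using a py by (rule dvd_add)
    then show ?thesis by simp
  qed
  have d: "\<not> int p ^ (j+2) dvd snd (powz D g p)" if jr2: "j + 2 \<le> r"
  proof
    assume e: "int p ^ (j+2) dvd snd (powz D g p)"
    have "int p ^ (j+2) dvd snd (powz D g p) - int p * snd g" using B jr2 by (simp add: k_def)
    then have "int p ^ (j+2) dvd snd (powz D g p) - (snd (powz D g p) - int p * snd g)"
      using dvd_diff[OF e] by blast
    then have "int p * int p ^ (j+1) dvd int p * snd g" by simp
    then have "int p ^ (j+1) dvd snd g" using p_ge3 by (subst (asm) dvd_mult_cancel_left) auto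
    then show False using ny by blast
  qed
  show ?thesis using normz_pow_cong[OF h] B c d by blast
qed

end



locale pellr = pellctx +
  fixes r :: nat
  assumes r1: "r \<ge> 1"
begin

abbreviation "m \<equiv> int p ^ r"
abbreviation "G \<equiv> pell_group (residue_ring (int p ^ r)) D"

lemma m1: "m > 1" using Mgt1 r1 by blast
lemma m0: "m > 0" using m1 by linarith

lemma G_comm: "comm_group G" using pg_comm_group[OF m1] .

interpretation G: comm_group G by (rule G_comm)

lemma Gc: "carrier G = {a. 0 \<le> fst a \<and> fst a < m \<and> 0 \<le> snd a \<and> snd a < m \<and> normz D a mod m = 1}"
  using pg_carrier[OF m1] .

lemma carrier_norm: "a \<in> carrier G \<Longrightarrow> m dvd normz D a - 1"
  using Gc m1 mod_eq_dvd_iff[of "normz D a" m 1] by auto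

lemma modp_fst1: "int p dvd fst a - 1 \<Longrightarrow> int p dvd fst (modp m a) - 1"
proof -
  assume h: "int p dvd fst a - 1"
  have "int p dvd fst a mod m - fst a" using dvd_modself p_dvd_pk[OF r1] dvd_trans by blast
  then have "int p dvd (fst a mod m - fst a) + (fst a - 1)" using h by (rule dvd_add)
  then show ?thesis by (simp add: modp_def)
qed

lemma modp_snd: "q \<le> r \<Longrightarrow> int p ^ q dvd snd (modp m a) \<longleftrightarrow> int p ^ q dvd snd a"
  using dvd_mod_iff[OF pk_dvd[of q r]] by (simp add: modp_def)

definition c0 :: "int \<times> int" where
  "c0 = ((1 + D*(int p * int p)) * invm m (1 - D*(int p * int p)), 2 * int p * invm m (1 - D*(int p * int p)))"
definition c :: "int \<times> int" where "c = modp m c0"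

lemma c_facts:
  "c \<in> carrier G" "int p dvd fst c - 1" "int p dvd snd c" "r \<ge> 2 \<Longrightarrow> \<not> int p ^ 2 dvd snd c"
proof -
  let ?i = "invm m (1 - D*(int p * int p))"
  have nd: "\<not> int p dvd 1 - D*(int p * int p)"
  proof
    assume "int p dvd 1 - D*(int p * int p)"
    moreover have "int p dvd D*(int p * int p)" by simp
    ultimately have "int p dvd (1 - D*(int p * int p)) + D*(int p * int p)" by (rule dvd_add)
    then show False using p_ndvd1 by simp
  qed
  have ih: "[(1 - D*(int p * int p)) * ?i = 1] (mod m)" using invm cop_p[OF nd] by blast
  then have ih': "m dvd (1 - D*(int p * int p)) * ?i - 1" by (simp add: cong_iff_dvd_diff)
  have ihp: "int p dvd (1 - D*(int p * int p)) * ?i - 1" using ih' p_dvd_pk[OF r1] dvd_trans by blast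
  have ip: "\<not> int p dvd ?i"
  proof
    assume "int p dvd ?i"
    then have "int p dvd (1 - D*(int p * int p)) * ?i" by (rule dvd_mult)
    then have "int p dvd (1 - D*(int p * int p)) * ?i - ((1 - D*(int p * int p)) * ?i - 1)" using ihp by (rule dvd_diff)
    then show False using p_ndvd1 by simp
  qed
  have "[normz D ((1*1 + D*(int p * int p)) * ?i, 2*1*int p*?i) = 1] (mod m)"
    by (rule pt_norm) (use ih in simp)
  then have "normz D c0 mod m = 1" using m1 by (simp add: c0_def cong_def)
  then show "c \<in> carrier G" using m0 by (simp add: Gc c_def normz_modp) (simp add: modp_def)
  have "int p dvd fst c0 - 1"
  proof -
    have e: "fst c0 - 1 = ((1 - D*(int p * int p)) * ?i - 1) + int p * (2 * D * int p * ?i)"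
      by (simp add: c0_def algebra_simps)
    show ?thesis unfolding e by (rule dvd_add[OF ihp]) simp
  qed
  then show "int p dvd fst c - 1" unfolding c_def by (rule modp_fst1)
  have "int p dvd snd c0" by (simp add: c0_def)
  then show "int p dvd snd c" using modp_snd[of 1] r1 by (simp add: c_def)
  assume r2: "r \<ge> 2"
  show "\<not> int p ^ 2 dvd snd c"
  proof
    assume "int p ^ 2 dvd snd c"
    then have "int p * int p dvd int p * (2 * ?i)" using modp_snd[OF r2, of c0]
      by (simp add: c_def c0_def power2_eq_square ac_simps)
    then have "int p dvd 2 * ?i" using p_ge3 by (subst (asm) dvd_mult_cancel_left) auto
    then show False using pI p_ndvd_2 ip by (simp add: prime_dvd_mult_iff)
  qed
qed

lemma c_iter:
  "i + 1 \<le> r \<Longrightarrow> int p dvd fst (c [^]\<^bsub>G\<^esub> (p ^ i)) - 1 \<and> int p ^ (i+1) dvd snd (c [^]\<^bsub>G\<^esub> (p ^ i))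
      \<and> (i + 2 \<le> r \<longrightarrow> \<not> int p ^ (i+2) dvd snd (c [^]\<^bsub>G\<^esub> (p ^ i)))"
proof (induction i)
  case 0
  then show ?case using c_facts by (auto simp: power2_eq_square)
next
  case (Suc i)
  define g where "g = c [^]\<^bsub>G\<^esub> (p ^ i)"
  have gc: "g \<in> carrier G" using c_facts(1) by (simp add: g_def)
  have IH: "int p dvd fst g - 1" "int p ^ (i+1) dvd snd g" "\<not> int p ^ (i+2) dvd snd g"
    using Suc by (auto simp: g_def)
  have e: "c [^]\<^bsub>G\<^esub> (p ^ Suc i) = modp m (powz D g p)"
    using G.nat_pow_pow[OF c_facts(1), of "p ^ i" p] pg_pow[OF m1 gc] by (simp add: g_def mult.commute)
  have IH2: "int p ^ Suc i dvd snd g" "\<not> int p ^ (Suc i + 1) dvd snd g" using IH by simp_all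
  have S: "int p dvd fst (powz D g p) - 1 \<and>
         int p ^ (Suc i+1) dvd snd (powz D g p) \<and> (Suc i + 2 \<le> r \<longrightarrow> \<not> int p ^ (Suc i+2) dvd snd (powz D g p))"
    using lvl_step[OF carrier_norm[OF gc] IH(1) IH2(1) IH2(2)] Suc.prems by simp
  have m2: "int p ^ (Suc i + 1) dvd snd (modp m (powz D g p))"
    using modp_snd[of "Suc i + 1" "powz D g p"] S Suc.prems by simp
  have m3: "Suc i + 2 \<le> r \<longrightarrow> \<not> int p ^ (Suc i + 2) dvd snd (modp m (powz D g p))"
    using modp_snd[of "Suc i + 2" "powz D g p"] S by auto
  have m1: "int p dvd fst (modp m (powz D g p)) - 1" using modp_fst1 S by blast
  show ?case unfolding e using m1 m2 m3 by blast
qed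

lemma ord_c: "G.ord c = p ^ (r - 1)"
proof -
  define g where "g = c [^]\<^bsub>G\<^esub> (p ^ (r - 1))"
  have gc: "g \<in> carrier G" using c_facts(1) by (simp add: g_def)
  have I: "int p dvd fst g - 1" "int p ^ r dvd snd g"
    using c_iter[of "r - 1"] r1 by (auto simp: g_def)
  have s0: "snd g = 0"
  proof -
    have "snd g mod m = 0" using I(2) by simp
    moreover have "snd g mod m = snd g" using gc Gc by simp
    ultimately show ?thesis by simp
  qed
  have "int p ^ r dvd fst g - 1"
    using lvlA[of r "fst g" "snd g" r r] carrier_norm[OF gc] I r1 by (simp add: normz_def)
  then have "fst g mod m = 1 mod m" by (simp add: mod_eq_dvd_iff)
  moreover have "fst g mod m = fst g" using gc Gc by simp
  moreover have "1 mod m = 1" using m1 by simp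
  ultimately have "fst g = 1" by simp
  then have g1: "g = \<one>\<^bsub>G\<^esub>" using s0 by (simp add: pg_one prod_eq_iff)
  then have d: "G.ord c dvd p ^ (r - 1)" using G.pow_eq_id[OF c_facts(1)] by (simp add: g_def)
  then obtain e where e: "e \<le> r - 1" "G.ord c = p ^ e" using divides_primepow_nat[OF p_prime] by blast
  show ?thesis
  proof (cases "e = r - 1")
    case True then show ?thesis using e by simp
  next
    case False
    then have e2: "e \<le> r - 2" "r \<ge> 2" using e by auto
    define h where "h = c [^]\<^bsub>G\<^esub> (p ^ (r - 2))"
    have "G.ord c dvd p ^ (r - 2)" using e e2 by (simp add: le_imp_power_dvd)
    then have "h = \<one>\<^bsub>G\<^esub>" using G.pow_eq_id[OF c_facts(1)] by (simp add: h_def)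
    moreover have "\<not> int p ^ r dvd snd h"
    proof -
      have a: "r - 2 + 1 \<le> r" "r - 2 + 2 \<le> r" using e2 by auto
      have "\<not> int p ^ (r - 2 + 2) dvd snd h" using c_iter[OF a(1)] a(2) unfolding h_def by blast
      moreover have "r - 2 + 2 = r" using e2 by simp
      ultimately show ?thesis by (simp only:) blast
    qed
    ultimately show ?thesis by (simp add: pg_one)
  qed
qed

end



context pellctx begin

definition F2 :: "(int \<times> int) ring" where
  "F2 = \<lparr>carrier = {0..<int p} \<times> {0..<int p}, mult = (\<lambda>a b. modp (int p) (mulz D a b)),
         one = (1, 0), zero = (0, 0), add = (\<lambda>a b. modp (int p) (fst a + fst b, snd a + snd b))\<rparr>"

lemma p0: "int p > 0" using p_ge3 by simp
lemma p1: "int p > 1" using p_ge3 by simp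

lemma F2_simps: "carrier F2 = {0..<int p} \<times> {0..<int p}" "mult F2 = (\<lambda>a b. modp (int p) (mulz D a b))"
  "one F2 = (1, 0)" "zero F2 = (0, 0)" "add F2 = (\<lambda>a b. modp (int p) (fst a + fst b, snd a + snd b))"
  by (simp_all add: F2_def)

lemma F2_abelian: "abelian_group F2"
proof (rule abelian_groupI)
  fix x y assume "x \<in> carrier F2" "y \<in> carrier F2"
  then show "x \<oplus>\<^bsub>F2\<^esub> y \<in> carrier F2" using p0 by (auto simp: F2_simps modp_def)
  show "x \<oplus>\<^bsub>F2\<^esub> y = y \<oplus>\<^bsub>F2\<^esub> x" by (simp add: F2_simps add.commute)
next
  show "\<zero>\<^bsub>F2\<^esub> \<in> carrier F2" using p0 by (simp add: F2_simps)
next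
  fix x y z assume "x \<in> carrier F2" "y \<in> carrier F2" "z \<in> carrier F2"
  show "x \<oplus>\<^bsub>F2\<^esub> y \<oplus>\<^bsub>F2\<^esub> z = x \<oplus>\<^bsub>F2\<^esub> (y \<oplus>\<^bsub>F2\<^esub> z)"
    by (simp add: F2_simps modp_def mod_simps add.assoc)
next
  fix x assume "x \<in> carrier F2"
  then show "\<zero>\<^bsub>F2\<^esub> \<oplus>\<^bsub>F2\<^esub> x = x" by (auto simp: F2_simps modp_def)
next
  fix x assume x: "x \<in> carrier F2"
  have "((- fst x) mod int p, (- snd x) mod int p) \<in> carrier F2" using p0 by (simp add: F2_simps)
  moreover have "((- fst x) mod int p, (- snd x) mod int p) \<oplus>\<^bsub>F2\<^esub> x = \<zero>\<^bsub>F2\<^esub>"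
    by (simp add: F2_simps modp_def mod_simps)
  ultimately show "\<exists>y\<in>carrier F2. y \<oplus>\<^bsub>F2\<^esub> x = \<zero>\<^bsub>F2\<^esub>" by blast
qed

lemma F2_comm_monoid: "comm_monoid F2"
proof (rule comm_monoidI)
  fix x y assume "x \<in> carrier F2" "y \<in> carrier F2"
  then show "x \<otimes>\<^bsub>F2\<^esub> y \<in> carrier F2" using p0 by (auto simp: F2_simps modp_def)
  show "x \<otimes>\<^bsub>F2\<^esub> y = y \<otimes>\<^bsub>F2\<^esub> x" by (simp add: F2_simps mulz_comm)
next
  show "\<one>\<^bsub>F2\<^esub> \<in> carrier F2" using p1 by (simp add: F2_simps)
next
  fix x y z assume "x \<in> carrier F2" "y \<in> carrier F2" "z \<in> carrier F2"
  show "x \<otimes>\<^bsub>F2\<^esub> y \<otimes>\<^bsub>F2\<^esub> z = x \<otimes>\<^bsub>F2\<^esub> (y \<otimes>\<^bsub>F2\<^esub> z)"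
    by (simp add: F2_simps modp_mulz_l modp_mulz_r mulz_assoc)
next
  fix x assume "x \<in> carrier F2"
  then show "\<one>\<^bsub>F2\<^esub> \<otimes>\<^bsub>F2\<^esub> x = x" by (auto simp: F2_simps modp_def mulz_one)
qed

lemma F2_cring: "cring F2"
proof (rule cringI[OF F2_abelian F2_comm_monoid])
  fix x y z :: "int \<times> int"
  have "modp (int p) (mulz D (modp (int p) (fst x + fst y, snd x + snd y)) z) =
        modp (int p) (mulz D (fst x + fst y, snd x + snd y) z)" by (rule modp_mulz_l)
  also have "mulz D (fst x + fst y, snd x + snd y) z =
      (fst (mulz D x z) + fst (mulz D y z), snd (mulz D x z) + snd (mulz D y z))"
    by (simp add: mulz_def algebra_simps)
  also have "modp (int p) \<dots> = modp (int p) (fst (modp (int p) (mulz D x z)) + fst (modp (int p) (mulz D y z)),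
                   snd (modp (int p) (mulz D x z)) + snd (modp (int p) (mulz D y z)))"
    by (simp add: modp_def mod_simps)
  finally show "(x \<oplus>\<^bsub>F2\<^esub> y) \<otimes>\<^bsub>F2\<^esub> z = x \<otimes>\<^bsub>F2\<^esub> z \<oplus>\<^bsub>F2\<^esub> y \<otimes>\<^bsub>F2\<^esub> z"
    by (simp add: F2_simps)
qed

lemma small_dvd: assumes "0 \<le> x" "x < int p" "int p dvd x" shows "x = 0"
proof -
  have "x mod int p = x" using assms(1,2) by simp
  moreover have "x mod int p = 0" using assms(3) by (rule dvd_imp_mod_0)
  ultimately show "x = 0" by simp
qed

lemma norm_nz:
  assumes "a \<in> carrier F2" "a \<noteq> (0, 0)"
  shows "\<not> int p dvd normz D a"
proof
  assume h: "int p dvd normz D a"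
  have "int p dvd fst a \<and> int p dvd snd a" using h by (intro NR) (simp add: normz_def)
  then have "fst a = 0 \<and> snd a = 0" using assms(1) small_dvd by (auto simp: F2_simps)
  then show False using assms(2) by (simp add: prod_eq_iff)
qed

lemma F2_field: "field F2"
proof (rule cring.cring_fieldI2[OF F2_cring])
  show "\<zero>\<^bsub>F2\<^esub> \<noteq> \<one>\<^bsub>F2\<^esub>" by (simp add: F2_simps)
next
  fix a assume a: "a \<in> carrier F2" "a \<noteq> \<zero>\<^bsub>F2\<^esub>"
  then have "\<not> int p dvd normz D a" using norm_nz by (simp add: F2_simps)
  then have "coprime (normz D a) (int p)" using pI prime_imp_coprime coprime_commute by blast
  then obtain ni where ni: "[normz D a * ni = 1] (mod int p)" using cong_solve_coprime_int by blast
  define b where "b = modp (int p) (fst a * ni, - snd a * ni)"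
  have "b \<in> carrier F2" using p0 by (simp add: b_def modp_def F2_simps)
  moreover have "a \<otimes>\<^bsub>F2\<^esub> b = \<one>\<^bsub>F2\<^esub>"
  proof -
    have "a \<otimes>\<^bsub>F2\<^esub> b = modp (int p) (mulz D a (fst a * ni, - snd a * ni))"
      by (simp add: F2_simps b_def modp_mulz_r)
    also have "mulz D a (fst a * ni, - snd a * ni) = (normz D a * ni, 0)"
      by (simp add: mulz_def normz_def algebra_simps)
    also have "modp (int p) (normz D a * ni, 0) = (1, 0)" using ni p1 by (simp add: modp_def cong_def)
    finally show ?thesis by (simp add: F2_simps)
  qed
  ultimately show "\<exists>b\<in>carrier F2. a \<otimes>\<^bsub>F2\<^esub> b = \<one>\<^bsub>F2\<^esub>" by blast
qed

lemma F2_pow: "a \<in> carrier F2 \<Longrightarrow> a [^]\<^bsub>F2\<^esub> n = modp (int p) (powz D a n)"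
proof (induction n)
  case 0 then show ?case using p1 by (simp add: F2_simps modp_def)
next
  case (Suc n) then show ?case by (simp add: F2_simps modp_mulz_l)
qed

lemma F2_card: "card (carrier F2) = p * p"
proof -
  have "card {0..<int p} = p" by simp
  then show ?thesis unfolding F2_simps card_cartesian_product by simp
qed

end



context pellr begin

interpretation G: comm_group G by (rule G_comm)
interpretation F: field F2 by (rule F2_field)

lemma fin_F2: "finite (carrier F2)" by (simp add: F2_simps)

lemma zeta_exists:
  "\<exists>z \<in> carrier F2. (\<forall>k. z [^]\<^bsub>F2\<^esub> k = \<one>\<^bsub>F2\<^esub> \<longrightarrow> (p + 1) dvd k) \<and> normz D z mod int p = 1"
proof -
  interpret M: group "mult_of F2" by (rule F.field_mult_group)
  obtain g where g: "g \<in> carrier (mult_of F2)" and gen: "carrier (mult_of F2) = {g [^]\<^bsub>F2\<^esub> i | i::nat. i \<in> UNIV}"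
    using F.finite_field_mult_group_has_gen[OF fin_F2] by blast
  have gF: "g \<in> carrier F2" and g0: "g \<noteq> (0,0)" using g by (auto simp: F2_simps)
  have ordM: "order (mult_of F2) = p * p - 1"
    using F.order_mult_of[OF fin_F2] F2_card by (simp add: order_def)
  have o1: "M.ord g \<le> p * p - 1" using M.ord_le_group_order[OF _ g] fin_F2 ordM by simp
  have "carrier (mult_of F2) = {g [^]\<^bsub>mult_of F2\<^esub> x | x. x \<in> {0 .. M.ord g - 1}}"
    using M.ord_elems[OF _ g] fin_F2 gen by (simp add: nat_pow_mult_of)
  then have "carrier (mult_of F2) = (\<lambda>x. g [^]\<^bsub>mult_of F2\<^esub> x) ` {0 .. M.ord g - 1}" by auto
  then have "card (carrier (mult_of F2)) \<le> card {0 .. M.ord g - 1}"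
    by (metis card_image_le finite_atLeastAtMost)
  moreover have "M.ord g \<ge> 1" using M.ord_ge_1[OF _ g] fin_F2 by simp
  ultimately have o2: "p * p - 1 \<le> M.ord g" using ordM by (simp add: order_def)
  have ordg: "M.ord g = (p - 1) * (p + 1)" using o1 o2 by (simp add: algebra_simps)
  define z where "z = g [^]\<^bsub>F2\<^esub> (p - 1)"
  have zF: "z \<in> carrier F2" using gF by (simp add: z_def)
  have Z1: "(p + 1) dvd k" if "z [^]\<^bsub>F2\<^esub> k = \<one>\<^bsub>F2\<^esub>" for k
  proof -
    have "g [^]\<^bsub>mult_of F2\<^esub> ((p - 1) * k) = \<one>\<^bsub>mult_of F2\<^esub>"
      using that F.nat_pow_pow[OF gF] by (simp add: z_def nat_pow_mult_of)
    then have "(p - 1) * (p + 1) dvd (p - 1) * k" using M.pow_eq_id[OF g] ordg by (simp only:)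
    moreover have "p - 1 > 0" using p_ge3 by simp
    ultimately show ?thesis using nat_mult_dvd_cancel1 by blast
  qed
  have "\<not> int p dvd normz D g" using norm_nz[OF gF g0] .
  then have fe: "[normz D g ^ (p - 1) = 1] (mod int p)" by (rule fermat_int)
  have "normz D z mod int p = normz D (powz D g (p - 1)) mod int p"
    using F2_pow[OF gF] normz_modp by (simp add: z_def)
  also have "\<dots> = 1" using fe p1 by (simp add: normz_powz cong_def)
  finally show ?thesis using zF Z1 by blast
qed

lemma b_exists: "\<exists>b \<in> carrier G. \<forall>k. b [^]\<^bsub>G\<^esub> k = \<one>\<^bsub>G\<^esub> \<longrightarrow> (p + 1) dvd k"
proof -
  obtain z where zF: "z \<in> carrier F2" and Z1: "\<And>k. z [^]\<^bsub>F2\<^esub> k = \<one>\<^bsub>F2\<^esub> \<Longrightarrow> (p + 1) dvd k"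
    and Z2: "normz D z mod int p = 1" using zeta_exists by blast
  obtain x y where xy: "z = (x, y)" by (cases z)
  have xr: "0 \<le> x" "x < int p" "0 \<le> y" "y < int p" using zF xy by (auto simp: F2_simps)
  have n1: "int p dvd x*x - D*(y*y) - 1"
    using Z2 xy p1 mod_eq_dvd_iff[of "normz D (x,y)" "int p" 1] by (simp add: normz_def)
  have Z4: "\<not> int p dvd x - 1"
  proof
    assume h: "int p dvd x - 1"
    have "int p dvd (x - 1) * (x + 1)" using h by simp
    then have "int p dvd (x - 1) * (x + 1) - (x*x - D*(y*y) - 1)" using n1 by (rule dvd_diff)
    moreover have "(x - 1) * (x + 1) - (x*x - D*(y*y) - 1) = D*(y*y)" by (simp add: algebra_simps)
    ultimately have "int p dvd D*(y*y)" by simp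
    then have "int p dvd y" using pI p_ndvd_D by (simp add: prime_dvd_mult_iff)
    then have y0: "y = 0" using small_dvd xr by blast
    have "x mod int p = 1 mod int p" using h by (simp add: mod_eq_dvd_iff)
    then have x1: "x = 1" using xr p1 by simp
    have "z [^]\<^bsub>F2\<^esub> (1::nat) = \<one>\<^bsub>F2\<^esub>" using zF xy x1 y0 p1 by (simp add: F2_simps mulz_def modp_def)
    then have "(p + 1) dvd 1" by (rule Z1)
    then show False using p_ge3 by simp
  qed
  have zG1: "z \<in> carrier (pell_group (residue_ring (int p ^ 1)) D)"
    using pg_carrier[of "int p" D] p1 xr Z2 xy by simp
  obtain t where t: "t \<in> {0..<int p ^ 1}" "fp 1 t = z"
    using fp_surj[of 1 z] zG1 Z4 xy by auto
  define b where "b = fp r t"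
  have bG: "b \<in> carrier G" using fp_carrier[OF r1] by (simp add: b_def)
  have red: "modp (int p) b = z"
  proof -
    have c1: "[(t*t - D) * iv r t = 1] (mod int p)"
      using iv_dvd[of r t] p_dvd_pk[OF r1] dvd_trans by (simp add: cong_iff_dvd_diff) blast
    have c2: "[(t*t - D) * iv 1 t = 1] (mod int p)"
      using iv_dvd[of 1 t] by (simp add: cong_iff_dvd_diff)
    have "[(t*t - D) * iv r t = (t*t - D) * iv 1 t] (mod int p)"
      using c1 c2 cong_sym cong_trans by blast
    then have ci: "[iv r t = iv 1 t] (mod int p)"
      using cong_mult_lcancel[of "t*t - D" "int p"] cop_p[of "t*t - D" 1] tD_ndvd by auto
    have "modp (int p) b = modp (int p) ((t*t + D) * iv r t, 2*t*iv r t)"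
      using modp_modp[OF p_dvd_pk[OF r1]] by (simp add: b_def fp_def)
    also have "\<dots> = modp (int p) ((t*t + D) * iv 1 t, 2*t*iv 1 t)"
      unfolding modp_def using ci by (auto simp flip: cong_def intro!: cong_mult)
    also have "\<dots> = fp 1 t" by (simp add: fp_def)
    finally show ?thesis using t by simp
  qed
  have "(p + 1) dvd k" if "b [^]\<^bsub>G\<^esub> k = \<one>\<^bsub>G\<^esub>" for k
  proof -
    have "modp m (powz D b k) = (1, 0)" using that pg_pow[OF m1 bG] by (simp add: pg_one)
    then have "modp (int p) (modp m (powz D b k)) = (1, 0)" using p1 by (simp add: modp_def)
    then have "modp (int p) (powz D (modp (int p) b) k) = (1, 0)"
      using modp_modp[OF p_dvd_pk[OF r1]] powz_modp by simp
    then have "z [^]\<^bsub>F2\<^esub> k = \<one>\<^bsub>F2\<^esub>" using red F2_pow[OF zF] by (simp add: F2_simps)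
    then show ?thesis by (rule Z1)
  qed
  then show ?thesis using bG by blast
qed

end



context pellr begin

interpretation G: comm_group G by (rule G_comm)

lemma finG: "finite (carrier G)"
  by (rule finite_subset[of _ "{0..<m} \<times> {0..<m}"]) (auto simp: Gc)

lemma cardG: "card (carrier G) = p ^ (r - 1) * (p + 1)"
proof -
  obtain r' where r': "r = Suc r'" using r1 by (cases r) auto
  have "p ^ r = p ^ (r - 1) * p" by (simp add: r')
  then show ?thesis using card_G[OF r1] by (simp add: algebra_simps)
qed

lemma cop: "coprime (p ^ (r - 1)) (p + 1)"
proof -
  have "coprime p (p + 1)" by simp
  then show ?thesis by simp
qed

lemma gen_exists: "\<exists>g \<in> carrier G. G.ord g = card (carrier G)"
proof -
  let ?n = "p ^ (r - 1) * (p + 1)"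
  obtain b' where b'G: "b' \<in> carrier G" and Z: "\<And>k. b' [^]\<^bsub>G\<^esub> k = \<one>\<^bsub>G\<^esub> \<Longrightarrow> (p + 1) dvd k"
    using b_exists by blast
  define oo where "oo = G.ord b'"
  have po: "(p + 1) dvd oo" using Z G.pow_ord_eq_1[OF b'G] by (simp add: oo_def)
  have o1: "oo \<ge> 1" using G.ord_ge_1[OF finG b'G] by (simp add: oo_def)
  define q where "q = oo div (p + 1)"
  obtain s where s: "oo = (p + 1) * s" using po by (rule dvdE)
  have qs: "q = s" unfolding q_def s by (rule nonzero_mult_div_cancel_left) simp
  have qo: "q dvd oo" using s qs by simp
  have q0: "q \<noteq> 0" using s qs o1 by (cases s) auto
  define b where "b = b' [^]\<^bsub>G\<^esub> q"
  have bG: "b \<in> carrier G" using b'G by (simp add: b_def)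
  have "G.ord b = oo div q"
    using G.ord_pow[OF b'G qo[unfolded oo_def] q0] by (simp add: b_def oo_def)
  also have "oo div q = p + 1" using s qs q0 by simp
  finally have ordb: "G.ord b = p + 1" .
  have aG: "c \<in> carrier G" using c_facts(1) .
  define g where "g = c \<otimes>\<^bsub>G\<^esub> b"
  have gG: "g \<in> carrier G" using aG bG by (simp add: g_def)
  have pw: "g [^]\<^bsub>G\<^esub> j = c [^]\<^bsub>G\<^esub> j \<otimes>\<^bsub>G\<^esub> b [^]\<^bsub>G\<^esub> j" for j :: nat
    unfolding g_def using G.pow_mult_distrib[OF G.m_comm[OF aG bG] aG bG] .
  have key: "?n dvd k" if gk: "g [^]\<^bsub>G\<^esub> k = \<one>\<^bsub>G\<^esub>" for k
  proof -
    have A: "p ^ (r - 1) dvd k"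
    proof -
      have "g [^]\<^bsub>G\<^esub> (k * (p + 1)) = (g [^]\<^bsub>G\<^esub> k) [^]\<^bsub>G\<^esub> (p + 1)"
        using G.nat_pow_pow[OF gG, of k "(p + 1)"] by (simp only:)
      then have "g [^]\<^bsub>G\<^esub> (k * (p + 1)) = \<one>\<^bsub>G\<^esub>" using gk by simp
      moreover have "b [^]\<^bsub>G\<^esub> (k * (p + 1)) = \<one>\<^bsub>G\<^esub>"
        by (rule G.pow_eq_id[OF bG, THEN iffD2]) (simp only: ordb dvd_triv_right)
      ultimately have "c [^]\<^bsub>G\<^esub> (k * (p + 1)) = \<one>\<^bsub>G\<^esub>" using pw aG by simp
      then have "G.ord c dvd k * (p + 1)" by (rule G.pow_eq_id[OF aG, THEN iffD1])
      then have "p ^ (r - 1) dvd k * (p + 1)" by (simp only: ord_c)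
      then show ?thesis using cop coprime_dvd_mult_left_iff by blast
    qed
    have B: "(p + 1) dvd k"
    proof -
      have "g [^]\<^bsub>G\<^esub> (k * p ^ (r - 1)) = (g [^]\<^bsub>G\<^esub> k) [^]\<^bsub>G\<^esub> p ^ (r - 1)"
        using G.nat_pow_pow[OF gG, of k "p ^ (r - 1)"] by (simp only:)
      then have "g [^]\<^bsub>G\<^esub> (k * p ^ (r - 1)) = \<one>\<^bsub>G\<^esub>" using gk by simp
      moreover have "c [^]\<^bsub>G\<^esub> (k * p ^ (r - 1)) = \<one>\<^bsub>G\<^esub>"
        by (rule G.pow_eq_id[OF aG, THEN iffD2]) (simp only: ord_c dvd_triv_right)
      ultimately have "b [^]\<^bsub>G\<^esub> (k * p ^ (r - 1)) = \<one>\<^bsub>G\<^esub>" using pw bG by simp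
      then have "G.ord b dvd k * p ^ (r - 1)" by (rule G.pow_eq_id[OF bG, THEN iffD1])
      then have "(p + 1) dvd k * p ^ (r - 1)" by (simp only: ordb)
      then show ?thesis using cop coprime_dvd_mult_left_iff coprime_commute by blast
    qed
    show ?thesis by (rule divides_mult[OF A B cop])
  qed
  have "G.ord g dvd ?n" using G.ord_dvd_group_order[OF gG] cardG by (simp add: order_def)
  moreover have "?n dvd G.ord g" by (rule key) (rule G.pow_ord_eq_1[OF gG])
  ultimately have "G.ord g = ?n" by (rule dvd_antisym)
  then have "G.ord g = card (carrier G)" using cardG by (simp only:)
  then show ?thesis using gG by blast
qed

lemma G_cyclic: "cyclic_group G"
proof -
  obtain g where gG: "g \<in> carrier G" and og: "G.ord g = card (carrier G)" using gen_exists by blast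
  have sub: "carrier (subgroup_generated G {g}) \<subseteq> carrier G" by (rule G.carrier_subgroup_generated_subset)
  have e: "G.ord g = card (carrier (subgroup_generated G {g}))"
    using G.cyclic_order_is_ord[OF gG] unfolding order_def .
  have "card (carrier (subgroup_generated G {g})) = card (carrier G)" using e og by linarith
  then have "carrier (subgroup_generated G {g}) = carrier G"
    using card_subset_eq[OF finG sub] by blast
  then have gen: "generate G (carrier G \<inter> {g}) = carrier G" by (simp only: carrier_subgroup_generated)
  have "subgroup_generated G {g} = G" unfolding subgroup_generated_def gen by simp
  then show ?thesis using gG unfolding cyclic_group_def by blast
qed

end


theorem theorem1:
  fixes p r :: nat and D :: int
  assumes "prime p" and "r \<ge> 1"
    and "D \<in> Units (residue_ring (int (p ^ r)))"
    and "\<not> QuadRes (int p) D"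
  shows "group (pell_group (residue_ring (int (p ^ r))) D)
       \<and> cyclic_group (pell_group (residue_ring (int (p ^ r))) D)
       \<and> card (carrier (pell_group (residue_ring (int (p ^ r))) D)) = p ^ (r - 1) * (p + 1)"
proof -
  interpret P: pellr p D r
    using assms by unfold_locales auto
  have e: "int (p ^ r) = int p ^ r" by simp
  show ?thesis unfolding e
    using P.G_comm P.G_cyclic P.cardG comm_group.axioms(2) by blast
qed

end
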